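(* Let $S,T$ be left inverse semi-braces, $\sigma:T\to\mathrm{Aut}(S)$ a homomorphism from $(T,\cdot)$ into the automorphism group of the left inverse semi-brace $S$ (write ${}^ua=\sigma(u)(a)$), and $\delta:S\to\mathrm{End}(T)$ an anti-homomorphism from $(S,+)$ into the endomorphism semigroup of $(T,+)$ (write $u^a=\delta(a)(u)$) satisfying $(uv)^{\lambda_a({}^ub)}+u((u^{-1})^b+w)=u(v^b+w)$ for all $a,b\in S$, $u,v,w\in T$. Let $B$ be the double semidirect product, i.e. $S\times T$ with $(a,u)+(b,v)=(a+b,u^b+v)$ and $(a,u)(b,v)=(a\,{}^ub,uv)$. Then the map $r_B$ associated to $B$ is given by $$r_B((a,u),(b,v))=\left(\left(\lambda_a({}^ub),\,u\,\Omega^b_{u,v}\right),\ \left({}^{(\Omega^b_{u,v})^{-1}u^{-1}}\rho_{{}^ub}(a),\ (\Omega^b_{u,v})^{-1}v\right)\right)$$ for all $(a,u),(b,v)\in S\times T$, where $\Omega^b_{u,v}=(u^{-1})^b+v$.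
   Context: An inverse semigroup is a semigroup $(S,\cdot)$ in which for each $a$ there is a unique $a^{-1}$ with $aa^{-1}a=a$, $a^{-1}aa^{-1}=a^{-1}$. A left inverse semi-brace is a triple $(S,+,\cdot)$ with $(S,+)$ a semigroup, $(S,\cdot)$ an inverse semigroup and $a(b+c)=ab+a(a^{-1}+c)$ for all $a,b,c$. Set $\lambda_a(b)=a(a^{-1}+b)$, $\rho_b(a)=(a^{-1}+b)^{-1}b$; the map associated to a left inverse semi-brace $X$ is $r_X(x,y)=(\lambda_x(y),\rho_y(x))$. An automorphism of the left inverse semi-brace $S$ is a bijection preserving both operations. That $\delta$ is an anti-homomorphism from $(S,+)$ means $u^{a+b}=(u^a)^b$. Under these hypotheses $B$ is a left inverse semi-brace. *)

theory Defs
  imports Main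
begin

definition semigroup_op :: "('a \<Rightarrow> 'a \<Rightarrow> 'a) \<Rightarrow> bool" where
  "semigroup_op f \<longleftrightarrow> (\<forall>a b c. f (f a b) c = f a (f b c))"

definition inverse_semigroup :: "('a \<Rightarrow> 'a \<Rightarrow> 'a) \<Rightarrow> bool" where
  "inverse_semigroup m \<longleftrightarrow> semigroup_op m \<and>
     (\<forall>a. \<exists>!x. m (m a x) a = a \<and> m (m x a) x = x)"

definition inv_of :: "('a \<Rightarrow> 'a \<Rightarrow> 'a) \<Rightarrow> 'a \<Rightarrow> 'a" where
  "inv_of m a = (THE x. m (m a x) a = a \<and> m (m x a) x = x)"

definition left_inverse_semi_brace :: "('a \<Rightarrow> 'a \<Rightarrow> 'a) \<Rightarrow> ('a \<Rightarrow> 'a \<Rightarrow> 'a) \<Rightarrow> bool" where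
  "left_inverse_semi_brace add m \<longleftrightarrow> semigroup_op add \<and> inverse_semigroup m \<and>
     (\<forall>a b c. m a (add b c) = add (m a b) (m a (add (inv_of m a) c)))"

definition lam :: "('a \<Rightarrow> 'a \<Rightarrow> 'a) \<Rightarrow> ('a \<Rightarrow> 'a \<Rightarrow> 'a) \<Rightarrow> 'a \<Rightarrow> 'a \<Rightarrow> 'a" where
  "lam add m a b = m a (add (inv_of m a) b)"

definition rho :: "('a \<Rightarrow> 'a \<Rightarrow> 'a) \<Rightarrow> ('a \<Rightarrow> 'a \<Rightarrow> 'a) \<Rightarrow> 'a \<Rightarrow> 'a \<Rightarrow> 'a" where
  "rho add m b a = m (inv_of m (add (inv_of m a) b)) b"

definition r_map :: "('a \<Rightarrow> 'a \<Rightarrow> 'a) \<Rightarrow> ('a \<Rightarrow> 'a \<Rightarrow> 'a) \<Rightarrow> 'a \<Rightarrow> 'a \<Rightarrow> 'a \<times> 'a" where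
  "r_map add m x y = (lam add m x y, rho add m y x)"

definition semi_brace_aut :: "('a \<Rightarrow> 'a \<Rightarrow> 'a) \<Rightarrow> ('a \<Rightarrow> 'a \<Rightarrow> 'a) \<Rightarrow> ('a \<Rightarrow> 'a) \<Rightarrow> bool" where
  "semi_brace_aut add m f \<longleftrightarrow> bij f \<and> (\<forall>a b. f (add a b) = add (f a) (f b)) \<and>
     (\<forall>a b. f (m a b) = m (f a) (f b))"

definition dsp_add :: "('a \<Rightarrow> 'a \<Rightarrow> 'a) \<Rightarrow> ('b \<Rightarrow> 'b \<Rightarrow> 'b) \<Rightarrow> ('a \<Rightarrow> 'b \<Rightarrow> 'b)
    \<Rightarrow> 'a \<times> 'b \<Rightarrow> 'a \<times> 'b \<Rightarrow> 'a \<times> 'b" where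
  "dsp_add addS addT \<delta> x y = (addS (fst x) (fst y), addT (\<delta> (fst y) (snd x)) (snd y))"

definition dsp_mult :: "('a \<Rightarrow> 'a \<Rightarrow> 'a) \<Rightarrow> ('b \<Rightarrow> 'b \<Rightarrow> 'b) \<Rightarrow> ('b \<Rightarrow> 'a \<Rightarrow> 'a)
    \<Rightarrow> 'a \<times> 'b \<Rightarrow> 'a \<times> 'b \<Rightarrow> 'a \<times> 'b" where
  "dsp_mult mS mT \<sigma> x y = (mS (fst x) (\<sigma> (snd x) (fst y)), mT (snd x) (snd y))"

end

theory Submission
  imports Defs
begin

lemma inv_props:
  assumes "inverse_semigroup m"
  shows "m (m a (inv_of m a)) a = a \<and> m (m (inv_of m a) a) (inv_of m a) = inv_of m a"
proof -
  from assms have "\<exists>!x. m (m a x) a = a \<and> m (m x a) x = x"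
    unfolding inverse_semigroup_def by blast
  then show ?thesis unfolding inv_of_def by (rule theI')
qed

lemma inv_unique:
  assumes "inverse_semigroup m" "m (m a x) a = a" "m (m x a) x = x"
  shows "inv_of m a = x"
proof -
  from assms(1) have "\<exists>!x. m (m a x) a = a \<and> m (m x a) x = x"
    unfolding inverse_semigroup_def by blast
  then show ?thesis unfolding inv_of_def by (rule the1_equality) (simp add: assms(2,3))
qed

lemma aut_inv:
  assumes "inverse_semigroup m" "\<And>a b. f (m a b) = m (f a) (f b)"
  shows "f (inv_of m a) = inv_of m (f a)"
proof -
  note p = inv_props[OF assms(1), of a]
  have "f (m (m a (inv_of m a)) a) = f a" using p by simp
  hence c1: "m (m (f a) (f (inv_of m a))) (f a) = f a" by (simp add: assms(2))
  moreover have "f (m (m (inv_of m a) a) (inv_of m a)) = f (inv_of m a)" using p by simp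
  hence "m (m (f (inv_of m a)) (f a)) (f (inv_of m a)) = f (inv_of m a)" by (simp add: assms(2))
  ultimately have "inv_of m (f a) = f (inv_of m a)" by (rule inv_unique[OF assms(1)])
  thus ?thesis by simp
qed

theorem proposition42:
  fixes addS mS :: "'a \<Rightarrow> 'a \<Rightarrow> 'a"
    and addT mT :: "'b \<Rightarrow> 'b \<Rightarrow> 'b"
    and \<sigma> :: "'b \<Rightarrow> 'a \<Rightarrow> 'a"
    and \<delta> :: "'a \<Rightarrow> 'b \<Rightarrow> 'b"
  assumes S: "left_inverse_semi_brace addS mS"
    and T: "left_inverse_semi_brace addT mT"
    and sigma_aut: "\<And>u. semi_brace_aut addS mS (\<sigma> u)"
    and sigma_hom: "\<And>u v. \<sigma> (mT u v) = \<sigma> u \<circ> \<sigma> v"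
    and delta_end: "\<And>a u v. \<delta> a (addT u v) = addT (\<delta> a u) (\<delta> a v)"
    and delta_anti: "\<And>a b. \<delta> (addS a b) = \<delta> b \<circ> \<delta> a"
    and compat: "\<And>a b u v w.
        addT (\<delta> (lam addS mS a (\<sigma> u b)) (mT u v))
             (mT u (addT (\<delta> b (inv_of mT u)) w))
        = mT u (addT (\<delta> b v) w)"
  shows "\<And>a u b v.
     (let \<Omega> = addT (\<delta> b (inv_of mT u)) v in
      r_map (dsp_add addS addT \<delta>) (dsp_mult mS mT \<sigma>) (a, u) (b, v) =
        ((lam addS mS a (\<sigma> u b), mT u \<Omega>),
         (\<sigma> (mT (inv_of mT \<Omega>) (inv_of mT u)) (rho addS mS (\<sigma> u b) a),
          mT (inv_of mT \<Omega>) v)))"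
proof -
  have iS: "inverse_semigroup mS" and iT: "inverse_semigroup mT"
    using S T unfolding left_inverse_semi_brace_def by blast+
  have aS: "\<And>x y z. mS (mS x y) z = mS x (mS y z)" and aT: "\<And>x y z. mT (mT x y) z = mT x (mT y z)"
    using iS iT unfolding inverse_semigroup_def semigroup_op_def by blast+
  have sadd: "\<And>u x y. \<sigma> u (addS x y) = addS (\<sigma> u x) (\<sigma> u y)"
    and smul: "\<And>u x y. \<sigma> u (mS x y) = mS (\<sigma> u x) (\<sigma> u y)"
    and sbij: "\<And>u. bij (\<sigma> u)"
    using sigma_aut unfolding semi_brace_aut_def by auto
  have sinv: "\<sigma> u (inv_of mS x) = inv_of mS (\<sigma> u x)" for u x
    by (rule aut_inv[OF iS]) (rule smul)
  have shom: "\<And>u v x. \<sigma> (mT u v) x = \<sigma> u (\<sigma> v x)" using sigma_hom by simp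
  have sid: "\<sigma> (mT u (inv_of mT u)) x = x" for u x
  proof -
    let ?e = "mT u (inv_of mT u)"
    have ee: "mT ?e ?e = ?e" using inv_props[OF iT, of u] by (simp add: aT[symmetric])
    have "\<sigma> ?e (\<sigma> ?e x) = \<sigma> ?e x" using shom[of ?e ?e x] ee by simp
    moreover have "inj (\<sigma> ?e)" using sbij bij_is_inj by blast
    ultimately show ?thesis by (simp add: inj_eq)
  qed
  have ii: "inv_of mT (inv_of mT u) = u" for u
    by (rule inv_unique[OF iT]) (use inv_props[OF iT, of u] in auto)
  have sid2: "\<sigma> (inv_of mT u) (\<sigma> u x) = x" for u x
    using sid[of "inv_of mT u" x] by (simp add: ii shom)
  have s1: "\<sigma> u (\<sigma> (inv_of mT u) y) = y" for u y
    using sid[of u y] by (simp add: shom)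
  let ?B = "dsp_mult mS mT \<sigma>"
  have pS: "mS (mS a (inv_of mS a)) a = a" "mS (mS (inv_of mS a) a) (inv_of mS a) = inv_of mS a" for a
    using inv_props[OF iS] by auto
  have pT: "mT (mT u (inv_of mT u)) u = u" "mT (mT (inv_of mT u) u) (inv_of mT u) = inv_of mT u" for u
    using inv_props[OF iT] by auto
  have h1: "?B (?B (a, u) (\<sigma> (inv_of mT u) (inv_of mS a), inv_of mT u)) (a, u) = (a, u)" for a u
    using pS pT by (simp add: dsp_mult_def shom smul s1 sid)
  have h2: "?B (?B (\<sigma> (inv_of mT u) (inv_of mS a), inv_of mT u) (a, u)) (\<sigma> (inv_of mT u) (inv_of mS a), inv_of mT u)
      = (\<sigma> (inv_of mT u) (inv_of mS a), inv_of mT u)" for a u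
  proof -
    have e1: "\<sigma> (mT (inv_of mT u) u) (\<sigma> (inv_of mT u) (inv_of mS a)) = \<sigma> (inv_of mT u) (inv_of mS a)"
      by (simp add: shom s1)
    have e2: "mS (mS (\<sigma> (inv_of mT u) (inv_of mS a)) (\<sigma> (inv_of mT u) a)) (\<sigma> (inv_of mT u) (inv_of mS a))
        = \<sigma> (inv_of mT u) (inv_of mS a)"
      by (simp add: pS flip: smul)
    show ?thesis by (simp add: dsp_mult_def e1 e2 pT)
  qed
  have iB: "inverse_semigroup ?B"
    unfolding inverse_semigroup_def semigroup_op_def
  proof (intro conjI allI)
    fix x y z :: "'a \<times> 'b"
    show "?B (?B x y) z = ?B x (?B y z)"
      by (simp add: dsp_mult_def aS aT shom smul)
  next
    fix x :: "'a \<times> 'b"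
    obtain a u where x: "x = (a, u)" by (cases x)
    let ?y = "(\<sigma> (inv_of mT u) (inv_of mS a), inv_of mT u)"
    show "\<exists>!y. ?B (?B x y) x = x \<and> ?B (?B y x) y = y"
    proof (rule ex1I[of _ ?y])
      show "?B (?B x ?y) x = x \<and> ?B (?B ?y x) ?y = ?y" using h1 h2 x by simp
    next
      fix z assume z: "?B (?B x z) x = x \<and> ?B (?B z x) z = z"
      obtain c w where zc: "z = (c, w)" by (cases z)
      have t1: "mT (mT u w) u = u" "mT (mT w u) w = w"
        using z by (auto simp: x zc dsp_mult_def)
      have w: "w = inv_of mT u" using inv_unique[OF iT t1] by simp
      have f1: "mS (mS a (\<sigma> u c)) a = a"
        using z by (auto simp: x zc dsp_mult_def shom smul s1 sid2 w)
      have f2: "mS (mS c (\<sigma> w a)) c = c"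
        using z by (auto simp: x zc dsp_mult_def shom smul s1 sid2 w)
      have f2': "mS (mS (\<sigma> u c) a) (\<sigma> u c) = \<sigma> u c"
        using arg_cong[OF f2, of "\<sigma> u"] by (simp add: smul w s1)
      have "inv_of mS a = \<sigma> u c" using inv_unique[OF iS f1 f2'] .
      then have "c = \<sigma> (inv_of mT u) (inv_of mS a)" by (simp add: sid2)
      then show "z = ?y" by (simp add: zc w)
    qed
  qed
  have Binv: "inv_of ?B (a, u) = (\<sigma> (inv_of mT u) (inv_of mS a), inv_of mT u)" for a u
    by (rule inv_unique[OF iB h1 h2])
  fix a u b v
  show "let \<Omega> = addT (\<delta> b (inv_of mT u)) v in
      r_map (dsp_add addS addT \<delta>) (dsp_mult mS mT \<sigma>) (a, u) (b, v) =
        ((lam addS mS a (\<sigma> u b), mT u \<Omega>),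
         (\<sigma> (mT (inv_of mT \<Omega>) (inv_of mT u)) (rho addS mS (\<sigma> u b) a),
          mT (inv_of mT \<Omega>) v))"
    unfolding Let_def r_map_def lam_def rho_def
    by (simp add: Binv dsp_add_def dsp_mult_def sadd smul sinv shom s1 sid2)
qed

end
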